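(* 1) For each odd $n\ge3$ there exists a binary Euclidean almost self-dual $[2n,n,\min\{4,n\}]_2$ code; in particular, for each odd $n\ge5$ there exists a binary Euclidean almost self-dual $[2n,n,4]_2$ code. 2) For each even $n\ge2$ there exists a binary Euclidean self-dual $[2n,n,\min\{4,n\}]_2$ code; in particular, for each even $n\ge4$ there exists a binary Euclidean self-dual $[2n,n,4]_2$ code.
   Context: For a binary linear $[n,k,d]_2$ code $\mathcal{C}$, $\mathrm{Hull}_E(\mathcal{C})=\mathcal{C}\cap\mathcal{C}^{\perp_E}$ with $\perp_E$ the dual under $\sum_ix_iy_i$. $\mathcal{C}$ is Euclidean self-dual if $\mathcal{C}=\mathcal{C}^{\perp_E}$. $\mathcal{C}$ is almost Euclidean self-orthogonal if $\dim(\mathrm{Hull}_E(\mathcal{C}))=k-1$, and almost Euclidean self-dual if it is almost Euclidean self-orthogonal and $n=2k$. *)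

theory Defs
  imports Main HOL.Vector_Spaces "HOL-Library.Z2" "HOL-Library.Function_Algebras"
begin

text \<open>Binary words of length N are functions nat => bit vanishing outside {0..<N};
  they form a vector space over GF(2) = bit with pointwise operations.\<close>

definition bscale :: "bit \<Rightarrow> (nat \<Rightarrow> bit) \<Rightarrow> (nat \<Rightarrow> bit)" where
  "bscale c v = (\<lambda>i. c * v i)"

global_interpretation bvs: vector_space bscale
  by unfold_locales (auto simp: bscale_def fun_eq_iff algebra_simps)

definition words :: "nat \<Rightarrow> (nat \<Rightarrow> bit) set" where
  "words N = {v. \<forall>i\<ge>N. v i = 0}"

definition wt :: "(nat \<Rightarrow> bit) \<Rightarrow> nat" where
  "wt v = card {i. v i \<noteq> 0}"

definition einner :: "nat \<Rightarrow> (nat \<Rightarrow> bit) \<Rightarrow> (nat \<Rightarrow> bit) \<Rightarrow> bit" where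
  "einner N x y = (\<Sum>i<N. x i * y i)"

definition edual :: "nat \<Rightarrow> (nat \<Rightarrow> bit) set \<Rightarrow> (nat \<Rightarrow> bit) set" where
  "edual N C = {y \<in> words N. \<forall>x\<in>C. einner N x y = 0}"

definition hullE :: "nat \<Rightarrow> (nat \<Rightarrow> bit) set \<Rightarrow> (nat \<Rightarrow> bit) set" where
  "hullE N C = C \<inter> edual N C"

definition min_dist :: "(nat \<Rightarrow> bit) set \<Rightarrow> nat" where
  "min_dist C = Min {wt c | c. c \<in> C \<and> c \<noteq> 0}"

definition linear_code :: "nat \<Rightarrow> nat \<Rightarrow> nat \<Rightarrow> (nat \<Rightarrow> bit) set \<Rightarrow> bool" where
  "linear_code N k d C \<longleftrightarrow> C \<subseteq> words N \<and> bvs.subspace C \<and> bvs.dim C = k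
     \<and> (\<exists>c\<in>C. c \<noteq> 0) \<and> min_dist C = d"

definition euclid_self_dual :: "nat \<Rightarrow> (nat \<Rightarrow> bit) set \<Rightarrow> bool" where
  "euclid_self_dual N C \<longleftrightarrow> C = edual N C"

definition almost_euclid_self_orth :: "nat \<Rightarrow> (nat \<Rightarrow> bit) set \<Rightarrow> bool" where
  "almost_euclid_self_orth N C \<longleftrightarrow> bvs.dim (hullE N C) = bvs.dim C - 1"

definition almost_euclid_self_dual :: "nat \<Rightarrow> (nat \<Rightarrow> bit) set \<Rightarrow> bool" where
  "almost_euclid_self_dual N C \<longleftrightarrow> almost_euclid_self_orth N C \<and> N = 2 * bvs.dim C"

end

theory Submission
  imports Defs
begin

declare add_bit_eq_xor[simp del] mult_bit_eq_and[simp del]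

lemma bit_add_self[simp]: "x + x = (0::bit)"
  by (cases x) simp_all

lemma bit_eq_add_iff: "((x::bit) = y + z) \<longleftrightarrow> (x + y = z)"
  by (cases x; cases y; cases z) simp_all

lemma sum_fun_apply: "(sum f A) x = sum (\<lambda>a. f a x) A"
  by (induction A rule: infinite_finite_induct) auto

lemma sum_pairs: "(\<Sum>i<2*(n::nat). f i) = (\<Sum>k<n. f (2*k) + f (2*k+1))"
  by (induction n) (simp_all add: ac_simps)

lemma bscale_apply[simp]: "bscale c v i = c * v i" by (simp add: bscale_def)

lemma bit_of_nat: "(of_nat n :: bit) = (if even n then 0 else 1)"
  by (induction n) auto

definition Cd :: "nat \<Rightarrow> (nat \<Rightarrow> bit) set" where
  "Cd n = {v \<in> words (2*n). (\<forall>k<n. v (2*k) + v (2*k+1) = v 0 + v 1) \<and> (\<Sum>k<n. v (2*k)) = 0}"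

definition C0 :: "nat \<Rightarrow> (nat \<Rightarrow> bit) set" where
  "C0 n = {v \<in> Cd n. v 0 + v 1 = 0}"

definition gv :: "nat \<Rightarrow> nat \<Rightarrow> nat \<Rightarrow> bit" where
  "gv n i = (\<lambda>j. if j = 2*i \<or> j = 2*i+1 \<or> j = 2*n-2 \<or> j = 2*n-1 then 1 else 0)"

definition hv :: "nat \<Rightarrow> nat \<Rightarrow> bit" where
  "hv n = (\<lambda>j. if odd j \<and> j < 2*n then 1 else 0)"

lemma words_add: "x \<in> words N \<Longrightarrow> y \<in> words N \<Longrightarrow> x + y \<in> words N"
  by (simp add: words_def)

lemma subspace_Cd: "bvs.subspace (Cd n)"
  unfolding bvs.subspace_def
proof (intro conjI ballI allI)
  show "0 \<in> Cd n" by (simp add: Cd_def words_def)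
next
  fix x y assume x: "x \<in> Cd n" and y: "y \<in> Cd n"
  show "x + y \<in> Cd n" unfolding Cd_def
  proof (intro CollectI conjI allI impI)
    show "x + y \<in> words (2*n)" using x y by (simp add: Cd_def words_def)
    fix k assume "k < n"
    then have "x (2*k) + x (2*k+1) = x 0 + x 1" "y (2*k) + y (2*k+1) = y 0 + y 1"
      using x y by (auto simp: Cd_def)
    then show "(x + y) (2*k) + (x + y) (2*k+1) = (x + y) 0 + (x + y) 1"
      by (simp add: algebra_simps)
  next
    show "(\<Sum>k<n. (x + y) (2*k)) = 0" using x y by (simp add: Cd_def sum.distrib)
  qed
next
  fix c x assume x: "x \<in> Cd n"
  show "bscale c x \<in> Cd n" unfolding Cd_def
  proof (intro CollectI conjI allI impI)
    show "bscale c x \<in> words (2*n)" using x by (simp add: Cd_def words_def)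
    fix k assume "k < n"
    then have "x (2*k) + x (2*k+1) = x 0 + x 1"
      using x by (auto simp: Cd_def)
    then show "bscale c x (2*k) + bscale c x (2*k+1) = bscale c x 0 + bscale c x 1"
      by (simp flip: distrib_left)
  next
    show "(\<Sum>k<n. bscale c x (2*k)) = 0" using x by (simp add: Cd_def flip: sum_distrib_left)
  qed
qed

lemma subspace_C0: "bvs.subspace (C0 n)"
proof -
  have "C0 n = Cd n \<inter> {v. v 0 + v 1 = 0}" by (auto simp: C0_def)
  moreover have "bvs.subspace {v::nat\<Rightarrow>bit. v 0 + v 1 = 0}"
    unfolding bvs.subspace_def
    by (auto simp: algebra_simps simp flip: distrib_left)
  ultimately show ?thesis using subspace_Cd bvs.subspace_inter by simp
qed


lemma indep_pivot:
  assumes fin: "finite B"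
    and piv: "\<And>v. v \<in> B \<Longrightarrow> \<exists>p. v p = 1 \<and> (\<forall>w\<in>B. w \<noteq> v \<longrightarrow> w p = 0)"
  shows "bvs.independent B"
proof
  assume "bvs.dependent B"
  then obtain u v where v: "v \<in> B" "u v \<noteq> 0" and s: "(\<Sum>w\<in>B. bscale (u w) w) = 0"
    using bvs.dependent_finite[OF fin] by auto
  obtain p where p: "v p = 1" "\<forall>w\<in>B. w \<noteq> v \<longrightarrow> w p = 0" using piv[OF v(1)] by auto
  have "0 = (\<Sum>w\<in>B. bscale (u w) w) p" using s by simp
  also have "\<dots> = (\<Sum>w\<in>B. u w * w p)" by (simp add: sum_fun_apply)
  also have "\<dots> = u v * v p + (\<Sum>w\<in>B - {v}. u w * w p)"
    using fin v(1) by (simp add: sum.remove)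
  also have "(\<Sum>w\<in>B - {v}. u w * w p) = 0" using p(2) by (intro sum.neutral) auto
  finally show False using p(1) v(2) by simp
qed

lemma dv2: "((j::nat) div 2 = i) = (j = 2*i \<or> j = 2*i+1)" by linarith

lemma gv_alt: "n \<ge> 1 \<Longrightarrow> i < n \<Longrightarrow> gv n i j = (if j < 2*n \<and> (j div 2 = i \<or> j div 2 = n - 1) then 1 else 0)"
proof -
  assume a: "n \<ge> 1" "i < n"
  have "(j = 2*i \<or> j = 2*i+1 \<or> j = 2*n-2 \<or> j = 2*n-1) = (j < 2*n \<and> (j div 2 = i \<or> j div 2 = n - 1))"
    unfolding dv2 using a by (cases n) auto
  then show ?thesis unfolding gv_def by simp
qed

lemma gv_C0:
  assumes "n \<ge> 2" "i < n - 1"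
  shows "gv n i \<in> C0 n"
proof -
  have ev: "gv n i (2*k) = (if k < n \<and> (k = i \<or> k = n - 1) then 1 else 0)" for k
    using assms by (simp add: gv_alt)
  have od: "gv n i (2*k+1) = (if k < n \<and> (k = i \<or> k = n - 1) then 1 else 0)" for k
    using assms by (simp add: gv_alt)
  have w: "gv n i \<in> words (2*n)" using assms by (simp add: words_def gv_alt)
  have "(\<Sum>k<n. gv n i (2*k)) = (\<Sum>k\<in>{i, n-1}. 1)"
    unfolding ev using assms by (intro sum.mono_neutral_cong_right) auto
  also have "\<dots> = 0" using assms by simp
  finally have s: "(\<Sum>k<n. gv n i (2*k)) = 0" .
  have z: "gv n i 0 + gv n i 1 = 0" using ev[of 0] od[of 0] by simp
  show ?thesis unfolding C0_def Cd_def using w s z ev od by auto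
qed

lemma hv_Cd: "n \<ge> 1 \<Longrightarrow> hv n \<in> Cd n"
  by (auto simp: Cd_def hv_def words_def)

lemma hv_notC0: "n \<ge> 1 \<Longrightarrow> hv n \<notin> C0 n"
  by (auto simp: C0_def hv_def)

lemma C0_sub: "C0 n \<subseteq> Cd n" by (auto simp: C0_def)


lemma C0_span:
  assumes n: "n \<ge> 2"
  shows "C0 n \<subseteq> bvs.span (gv n ` {..<n-1})"
proof
  fix v assume v: "v \<in> C0 n"
  have vz: "v j = 0" if "j \<ge> 2*n" for j using v that by (auto simp: C0_def Cd_def words_def)
  have vp: "v (2*k+1) = v (2*k)" if "k < n" for k
  proof -
    have "v (2*k) + v (2*k+1) = 0" using v that by (auto simp: C0_def Cd_def)
    then show ?thesis by (metis add_right_cancel bit_add_self)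
  qed
  have vs: "(\<Sum>k<n. v (2*k)) = 0" using v by (auto simp: C0_def Cd_def)
  have vj: "v j = v (2 * (j div 2))" if "j < 2*n" for j
  proof -
    have "j = 2*(j div 2) \<or> j = 2*(j div 2)+1" by linarith
    moreover have "j div 2 < n" using that by linarith
    ultimately show ?thesis using vp by metis
  qed
  have last: "(\<Sum>i<n-1. v (2*i)) = v (2*(n-1))"
  proof -
    have "n = Suc (n-1)" using n by simp
    then have "(\<Sum>k<n. v (2*k)) = (\<Sum>i<n-1. v (2*i)) + v (2*(n-1))"
      by (metis sum.lessThan_Suc)
    with vs show ?thesis by (metis add_right_cancel bit_add_self)
  qed
  have eq: "v = (\<Sum>i<n-1. bscale (v (2*i)) (gv n i))"
  proof
    fix j
    have R: "(\<Sum>i<n-1. bscale (v (2*i)) (gv n i)) j = (\<Sum>i<n-1. v (2*i) * gv n i j)"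
      by (simp add: sum_fun_apply)
    show "v j = (\<Sum>i<n-1. bscale (v (2*i)) (gv n i)) j"
    proof (cases "j < 2*n")
      case False
      then show ?thesis unfolding R using n vz by (simp add: gv_alt)
    next
      case True
      show ?thesis
      proof (cases "j div 2 = n - 1")
        case True
        have "(\<Sum>i<n-1. v (2*i) * gv n i j) = (\<Sum>i<n-1. v (2*i))"
          using n \<open>j < 2*n\<close> True by (intro sum.cong) (auto simp: gv_alt)
        then show ?thesis unfolding R using last vj[OF \<open>j < 2*n\<close>] True by simp
      next
        case False
        have "(\<Sum>i<n-1. v (2*i) * gv n i j) = (\<Sum>i<n-1. if i = j div 2 then v (2*i) else 0)"
          using n \<open>j < 2*n\<close> False by (intro sum.cong) (auto simp: gv_alt)
        also have "\<dots> = v (2 * (j div 2))"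
        proof -
          have "j div 2 < n - 1" using \<open>j < 2*n\<close> False by linarith
          then show ?thesis by (simp add: sum.delta)
        qed
        finally show ?thesis unfolding R using vj[OF \<open>j < 2*n\<close>] by simp
      qed
    qed
  qed
  show "v \<in> bvs.span (gv n ` {..<n-1})"
    by (subst eq) (intro bvs.span_sum bvs.span_scale bvs.span_base imageI, simp)
qed

lemma gv_inj: "n \<ge> 2 \<Longrightarrow> inj_on (gv n) {..<n-1}"
proof (rule inj_onI)
  fix i i' assume a: "n \<ge> 2" "i \<in> {..<n-1}" "i' \<in> {..<n-1}" "gv n i = gv n i'"
  then have "gv n i (2*i) = gv n i' (2*i)" by simp
  moreover have "i < n" "i' < n" using a by auto
  ultimately show "i = i'" using a gv_alt[of n i "2*i"] gv_alt[of n i' "2*i"] by (auto split: if_splits)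
qed

lemma G_indep: "n \<ge> 2 \<Longrightarrow> bvs.independent (gv n ` {..<n-1})"
proof (rule indep_pivot)
  assume n: "n \<ge> 2"
  show "finite (gv n ` {..<n-1})" by simp
  fix v assume "v \<in> gv n ` {..<n-1}"
  then obtain i where i: "i < n-1" "v = gv n i" by auto
  show "\<exists>p. v p = 1 \<and> (\<forall>w\<in>gv n ` {..<n-1}. w \<noteq> v \<longrightarrow> w p = 0)"
    using i n by (intro exI[of _ "2*i"]) (auto simp: gv_alt)
qed

lemma G_sub: "n \<ge> 2 \<Longrightarrow> gv n ` {..<n-1} \<subseteq> C0 n"
  using gv_C0 by auto

lemma dim_C0: "n \<ge> 2 \<Longrightarrow> bvs.dim (C0 n) = n - 1"
  using bvs.dim_unique[OF G_sub C0_span G_indep] card_image[OF gv_inj] by simp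

lemma Cd_span:
  assumes n: "n \<ge> 2"
  shows "Cd n \<subseteq> bvs.span (insert (hv n) (gv n ` {..<n-1}))"
proof
  fix v assume v: "v \<in> Cd n"
  let ?S = "insert (hv n) (gv n ` {..<n-1})"
  have mono: "bvs.span (gv n ` {..<n-1}) \<subseteq> bvs.span ?S"
    by (rule bvs.span_mono) (rule subset_insertI)
  have C0S: "C0 n \<subseteq> bvs.span ?S" by (rule subset_trans[OF C0_span[OF n] mono])
  show "v \<in> bvs.span ?S"
  proof (cases "v 0 + v 1 = 0")
    case True
    then have "v \<in> C0 n" using v by (simp add: C0_def)
    then show ?thesis using C0S by (rule subsetD[rotated])
  next
    case False
    have h: "hv n \<in> Cd n" using n by (intro hv_Cd) simp
    have vh: "v + hv n \<in> Cd n" by (rule bvs.subspace_add[OF subspace_Cd v h])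
    have "(v + hv n) 0 + (v + hv n) 1 = 0" using False n
      by (cases "v 0"; cases "v 1") (simp_all add: hv_def)
    then have "v + hv n \<in> C0 n" using vh by (simp add: C0_def)
    then have s1: "v + hv n \<in> bvs.span ?S" using C0S by (rule subsetD[rotated])
    have s2: "hv n \<in> bvs.span ?S" by (rule bvs.span_base) (rule insertI1)
    have s3: "hv n + (v + hv n) \<in> bvs.span ?S" by (rule bvs.span_add[OF s2 s1])
    have "hv n + (v + hv n) = v"
    proof -
      have "\<And>a b. (a::bit) + (b + a) = b" by (case_tac a; case_tac b) simp_all
      then show ?thesis by (simp add: fun_eq_iff)
    qed
    then show ?thesis using s3 by simp
  qed
qed

lemma dim_Cd:
  assumes n: "n \<ge> 2"
  shows "bvs.dim (Cd n) = n"
proof (rule bvs.dim_unique[OF _ Cd_span[OF n]])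
  have "gv n ` {..<n-1} \<subseteq> Cd n" by (rule subset_trans[OF G_sub[OF n] C0_sub])
  moreover have "hv n \<in> Cd n" using n by (intro hv_Cd) simp
  ultimately show "insert (hv n) (gv n ` {..<n-1}) \<subseteq> Cd n" by (rule insert_subsetI[rotated])
  have sp: "bvs.span (gv n ` {..<n-1}) \<subseteq> C0 n"
    by (rule bvs.span_minimal[OF G_sub[OF n] subspace_C0])
  have hn: "hv n \<notin> C0 n" using n by (intro hv_notC0) simp
  have nin: "hv n \<notin> bvs.span (gv n ` {..<n-1})"
    using sp hn by blast
  show "bvs.independent (insert (hv n) (gv n ` {..<n-1}))"
    by (rule bvs.independent_insertI[OF nin G_indep[OF n]])
  have "hv n \<notin> gv n ` {..<n-1}" using G_sub[OF n] hn by blast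
  then have "card (insert (hv n) (gv n ` {..<n-1})) = Suc (card (gv n ` {..<n-1}))"
    by (simp add: card_insert_if)
  also have "card (gv n ` {..<n-1}) = n - 1" using card_image[OF gv_inj[OF n]] by simp
  finally show "card (insert (hv n) (gv n ` {..<n-1})) = n" using n by simp
qed

lemma Cd_pair: "x \<in> Cd n \<Longrightarrow> k < n \<Longrightarrow> x (2*k+1) = x (2*k) + (x 0 + x 1)"
proof -
  assume "x \<in> Cd n" "k < n"
  then have h: "x (2*k) + x (2*k+1) = x 0 + x 1" unfolding Cd_def by auto
  show ?thesis unfolding h[symmetric] by (simp flip: add.assoc)
qed

lemma bit_id4: "(p::bit)*q + (p+a)*(q+c) = p*c + a*q + a*c"
  by (cases p; cases q; cases a; cases c) simp_all

lemma inner_Cd: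
  assumes x: "x \<in> Cd n" and y: "y \<in> Cd n"
  shows "einner (2*n) x y = of_nat n * (x 0 + x 1) * (y 0 + y 1)"
proof -
  let ?a = "x 0 + x 1" and ?c = "y 0 + y 1"
  have t: "x (2*k) * y (2*k) + x (2*k+1) * y (2*k+1) = x (2*k) * ?c + ?a * y (2*k) + ?a * ?c"
    if "k < n" for k
  proof -
    have e: "x (2*k+1) = x (2*k) + ?a" "y (2*k+1) = y (2*k) + ?c" using Cd_pair[OF x that] Cd_pair[OF y that] by auto
    show ?thesis unfolding e by (rule bit_id4)
  qed
  have "einner (2*n) x y = (\<Sum>k<n. x (2*k) * ?c + ?a * y (2*k) + ?a * ?c)"
    unfolding einner_def sum_pairs using t by (intro sum.cong) auto
  also have "\<dots> = (\<Sum>k<n. x (2*k)) * ?c + ?a * (\<Sum>k<n. y (2*k)) + of_nat n * (?a * ?c)"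
    by (simp only: sum.distrib sum_constant card_lessThan flip: sum_distrib_left sum_distrib_right)
  also have "\<dots> = of_nat n * ?a * ?c"
  proof -
    have "(\<Sum>k<n. x (2*k)) = 0" "(\<Sum>k<n. y (2*k)) = 0" using x y by (auto simp: Cd_def)
    then show ?thesis by (simp only: mult_zero_left mult_zero_right add_0 mult.assoc)
  qed
  finally show ?thesis .
qed

lemma hull_odd:
  assumes "odd n"
  shows "hullE (2*n) (Cd n) = C0 n"
proof
  show "hullE (2*n) (Cd n) \<subseteq> C0 n"
  proof
    fix x assume "x \<in> hullE (2*n) (Cd n)"
    then have x: "x \<in> Cd n" "einner (2*n) x x = 0" by (auto simp: hullE_def edual_def)
    then have "(x 0 + x 1) * (x 0 + x 1) = 0" using inner_Cd[OF x(1) x(1)] assms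
      by (simp add: bit_of_nat mult.assoc)
    then have "x 0 + x 1 = 0" by simp
    then show "x \<in> C0 n" using x by (simp add: C0_def)
  qed
next
  show "C0 n \<subseteq> hullE (2*n) (Cd n)"
  proof
    fix x assume x: "x \<in> C0 n"
    then have xc: "x \<in> Cd n" by (simp add: C0_def)
    have "einner (2*n) y x = 0" if "y \<in> Cd n" for y
      using inner_Cd[OF that xc] x by (simp add: C0_def)
    then show "x \<in> hullE (2*n) (Cd n)" using xc by (auto simp: hullE_def edual_def Cd_def)
  qed
qed

lemma inner_gv:
  assumes n: "n \<ge> 2" and k: "k < n - 1"
  shows "einner (2*n) (gv n k) y = (y (2*k) + y (2*k+1)) + (y (2*(n-1)) + y (2*(n-1)+1))"
proof -
  have "einner (2*n) (gv n k) y = (\<Sum>m<n. gv n k (2*m) * y (2*m) + gv n k (2*m+1) * y (2*m+1))"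
    unfolding einner_def sum_pairs ..
  also have "\<dots> = (\<Sum>m\<in>{k, n-1}. y (2*m) + y (2*m+1))"
    using n k by (intro sum.mono_neutral_cong_right) (auto simp: gv_alt)
  also have "\<dots> = (y (2*k) + y (2*k+1)) + (y (2*(n-1)) + y (2*(n-1)+1))" using k by simp
  finally show ?thesis .
qed

lemma inner_hv: "einner (2*n) (hv n) y = (\<Sum>m<n. y (2*m+1))"
  unfolding einner_def sum_pairs by (intro sum.cong) (auto simp: hv_def)

lemma self_dual_even:
  assumes n: "n \<ge> 2" and ev: "even n"
  shows "Cd n = edual (2*n) (Cd n)"
proof
  show "Cd n \<subseteq> edual (2*n) (Cd n)"
  proof
    fix x assume x: "x \<in> Cd n"
    have "einner (2*n) y x = 0" if "y \<in> Cd n" for y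
      using inner_Cd[OF that x] ev by (simp add: bit_of_nat)
    then show "x \<in> edual (2*n) (Cd n)" using x by (auto simp: edual_def Cd_def)
  qed
next
  show "edual (2*n) (Cd n) \<subseteq> Cd n"
  proof
    fix y assume "y \<in> edual (2*n) (Cd n)"
    then have yw: "y \<in> words (2*n)" and yo: "\<And>x. x \<in> Cd n \<Longrightarrow> einner (2*n) x y = 0"
      by (auto simp: edual_def)
    define P where "P m = y (2*m) + y (2*m+1)" for m
    have Pl: "P k = P (n-1)" if "k < n" for k
    proof (cases "k = n - 1")
      case False
      then have "k < n - 1" using that by simp
      then have "einner (2*n) (gv n k) y = P k + P (n-1)" using inner_gv n by (simp add: P_def)
      moreover have "einner (2*n) (gv n k) y = 0" using yo gv_C0 C0_sub n \<open>k < n - 1\<close> by blast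
      ultimately show ?thesis by (metis add_right_cancel bit_add_self)
    qed simp
    have P0: "P k = y 0 + y 1" if "k < n" for k using Pl[OF that] Pl[of 0] n by (simp add: P_def)
    have "0 = einner (2*n) (hv n) y" using yo hv_Cd n by simp
    also have "\<dots> = (\<Sum>m<n. y (2*m) + P m)" unfolding inner_hv
      by (intro sum.cong) (auto simp: P_def algebra_simps)
    also have "\<dots> = (\<Sum>m<n. y (2*m)) + of_nat n * (y 0 + y 1)"
      using P0 by (simp add: sum.distrib)
    also have "\<dots> = (\<Sum>m<n. y (2*m))" using ev by (simp add: bit_of_nat)
    finally have s: "(\<Sum>m<n. y (2*m)) = 0" by simp
    show "y \<in> Cd n" unfolding Cd_def using yw s P0 by (simp add: P_def)
  qed
qed


lemma supp_fin: "c \<in> words N \<Longrightarrow> {i. c i \<noteq> 0} \<subseteq> {..<N}"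
  by (auto simp: words_def) (metis not_less zero_neq_one)

lemma wt_le: "c \<in> words N \<Longrightarrow> wt c \<le> N"
  unfolding wt_def using card_mono[OF _ supp_fin] by fastforce

lemma wt_lower:
  assumes n: "n \<ge> 2" and c: "c \<in> Cd n" "c \<noteq> 0"
  shows "min 4 n \<le> wt c"
proof -
  have cw: "c \<in> words (2*n)" using c by (simp add: Cd_def)
  have fin: "finite {i. c i \<noteq> 0}" using supp_fin[OF cw] finite_subset by blast
  show ?thesis
  proof (cases "c 0 + c 1 = 0")
    case False
    then have a: "c 0 + c 1 = 1" by simp
    define f where "f k = (if c (2*k) = 1 then 2*k else 2*k+1)" for k
    have "inj_on f {..<n}"
      by (rule inj_onI) (auto simp: f_def split: if_splits)
    moreover have "f ` {..<n} \<subseteq> {i. c i \<noteq> 0}"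
    proof
      fix i assume "i \<in> f ` {..<n}"
      then obtain k where k: "k < n" "i = f k" by auto
      show "i \<in> {i. c i \<noteq> 0}"
        using Cd_pair[OF c(1) k(1)] a k(2) by (cases "c (2*k)") (auto simp: f_def)
    qed
    ultimately have "card {..<n} \<le> wt c" unfolding wt_def using card_inj_on_le fin by blast
    then show ?thesis by simp
  next
    case True
    then have c0: "c \<in> C0 n" using c by (simp add: C0_def)
    have vp: "c (2*k+1) = c (2*k)" if "k < n" for k
      using Cd_pair[OF c(1) that] True by simp
    have "\<exists>j. c j \<noteq> 0"
    proof (rule ccontr)
      assume "\<not> (\<exists>j. c j \<noteq> 0)"
      then have "c = 0" by (auto simp: fun_eq_iff)
      then show False using c(2) by simp
    qed
    then obtain j where j: "c j \<noteq> 0" by blast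
    have jn: "j < 2*n" using j cw by (auto simp: words_def) (metis not_less zero_neq_one)
    define k where "k = j div 2"
    have kn: "k < n" using jn k_def by linarith
    have "j = 2*k \<or> j = 2*k+1" using k_def by linarith
    then have ck: "c (2*k) = 1" using vp[OF kn] j by auto
    have "\<exists>k'. k' < n \<and> k' \<noteq> k \<and> c (2*k') = 1"
    proof (rule ccontr)
      assume "\<not> ?thesis"
      then have "(\<Sum>m<n. c (2*m)) = (\<Sum>m<n. if m = k then 1 else 0)"
        using ck by (intro sum.cong) auto
      also have "\<dots> = 1" using kn by simp
      finally show False using c(1) by (simp add: Cd_def)
    qed
    then obtain k' where k': "k' < n" "k' \<noteq> k" "c (2*k') = 1" by auto
    have "{2*k, 2*k+1, 2*k', 2*k'+1} \<subseteq> {i. c i \<noteq> 0}"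
      using ck k' vp[OF kn] vp[OF k'(1)] by auto
    then have "card {2*k, 2*k+1, 2*k', 2*k'+1} \<le> wt c" unfolding wt_def using card_mono fin by blast
    moreover have "card {2*k, 2*k+1, 2*k', 2*k'+1} = 4" using k'(2) by auto
    ultimately show ?thesis by simp
  qed
qed

lemma wt_hv: "wt (hv n) = n"
proof -
  have "{i. hv n i \<noteq> 0} = (\<lambda>k. 2*k+1) ` {..<n}"
  proof (intro equalityI subsetI)
    fix i assume "i \<in> {i. hv n i \<noteq> 0}"
    then have i: "odd i" "i < 2*n" by (auto simp: hv_def split: if_splits)
    then have "i = 2*(i div 2)+1" "i div 2 < n" by (auto elim!: oddE)
    then show "i \<in> (\<lambda>k. 2*k+1) ` {..<n}" by (metis imageI lessThan_iff)
  qed (auto simp: hv_def)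
  then show ?thesis unfolding wt_def by (simp add: card_image inj_on_def)
qed


lemma hv_nz: "n \<ge> 1 \<Longrightarrow> hv n \<noteq> 0"
proof
  assume "n \<ge> 1" "hv n = 0"
  then have "hv n 1 = 0" by simp
  with \<open>n \<ge> 1\<close> show False by (simp add: hv_def)
qed

lemma wt_gv0:
  assumes n: "n \<ge> 3"
  shows "wt (gv n 0) = 4"
proof -
  have "{i. gv n 0 i \<noteq> 0} = {0, 1, 2*n-2, 2*n-1}"
    using n by (auto simp: gv_def)
  moreover obtain m where m: "n = m + 3" using n by (metis add.commute le_iff_add)
  ultimately show ?thesis unfolding wt_def by simp
qed

lemma min_dist_Cd:
  assumes n: "n \<ge> 2"
  shows "min_dist (Cd n) = min 4 n"
  unfolding min_dist_def
proof (rule Min_eqI)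
  have "{wt c |c. c \<in> Cd n \<and> c \<noteq> 0} \<subseteq> {..2*n}"
    using wt_le by (auto simp: Cd_def)
  then show "finite {wt c |c. c \<in> Cd n \<and> c \<noteq> 0}" using finite_subset by blast
  show "\<And>y. y \<in> {wt c |c. c \<in> Cd n \<and> c \<noteq> 0} \<Longrightarrow> min 4 n \<le> y"
    using wt_lower[OF n] by auto
  show "min 4 n \<in> {wt c |c. c \<in> Cd n \<and> c \<noteq> 0}"
  proof (cases "n \<le> 4")
    case True
    then show ?thesis using hv_Cd hv_nz wt_hv n
      by (intro CollectI exI[of _ "hv n"]) auto
  next
    case False
    have "gv n 0 \<in> C0 n" using gv_C0[of n 0] n by simp
    then have "gv n 0 \<in> Cd n" using C0_sub by blast
    moreover have "gv n 0 \<noteq> 0"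
    proof
      assume "gv n 0 = 0"
      then have "gv n 0 0 = 0" by simp
      then show False by (simp add: gv_def)
    qed
    ultimately show ?thesis using wt_gv0 False
      by (intro CollectI exI[of _ "gv n 0"]) auto
  qed
qed

lemma linear_Cd: "n \<ge> 2 \<Longrightarrow> linear_code (2*n) n (min 4 n) (Cd n)"
  unfolding linear_code_def
proof (intro conjI)
  assume n: "n \<ge> 2"
  show "Cd n \<subseteq> words (2*n)" by (auto simp: Cd_def)
  show "bvs.subspace (Cd n)" by (rule subspace_Cd)
  show "bvs.dim (Cd n) = n" using dim_Cd n .
  show "\<exists>c\<in>Cd n. c \<noteq> 0" using hv_Cd hv_nz n by (intro bexI[of _ "hv n"]) auto
  show "min_dist (Cd n) = min 4 n" using min_dist_Cd n .
qed

theorem theorem11: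
  shows "(\<forall>n::nat. odd n \<and> n \<ge> 3 \<longrightarrow>
            (\<exists>C. linear_code (2*n) n (min 4 n) C \<and> almost_euclid_self_dual (2*n) C))
       \<and> (\<forall>n::nat. odd n \<and> n \<ge> 5 \<longrightarrow>
            (\<exists>C. linear_code (2*n) n 4 C \<and> almost_euclid_self_dual (2*n) C))
       \<and> (\<forall>n::nat. even n \<and> n \<ge> 2 \<longrightarrow>
            (\<exists>C. linear_code (2*n) n (min 4 n) C \<and> euclid_self_dual (2*n) C))
       \<and> (\<forall>n::nat. even n \<and> n \<ge> 4 \<longrightarrow>
            (\<exists>C. linear_code (2*n) n 4 C \<and> euclid_self_dual (2*n) C))"
proof -
  have A: "linear_code (2*n) n (min 4 n) (Cd n) \<and> almost_euclid_self_dual (2*n) (Cd n)"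
    if "odd n" "n \<ge> 3" for n
  proof -
    have "almost_euclid_self_dual (2*n) (Cd n)"
      unfolding almost_euclid_self_dual_def almost_euclid_self_orth_def
      using hull_odd[OF that(1)] dim_C0[of n] dim_Cd[of n] that by simp
    then show ?thesis using linear_Cd that by simp
  qed
  have B: "linear_code (2*n) n (min 4 n) (Cd n) \<and> euclid_self_dual (2*n) (Cd n)"
    if "even n" "n \<ge> 2" for n
    using linear_Cd self_dual_even that by (simp add: euclid_self_dual_def)
  show ?thesis
  proof (intro conjI allI impI)
    fix n :: nat assume "odd n \<and> n \<ge> 3" then show "\<exists>C. linear_code (2*n) n (min 4 n) C \<and> almost_euclid_self_dual (2*n) C"
      using A by blast
  next
    fix n :: nat assume h: "odd n \<and> n \<ge> 5"
    then have "min 4 n = 4" by simp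
    moreover have "linear_code (2*n) n (min 4 n) (Cd n) \<and> almost_euclid_self_dual (2*n) (Cd n)"
      using A[of n] h by simp
    ultimately show "\<exists>C. linear_code (2*n) n 4 C \<and> almost_euclid_self_dual (2*n) C"
      by (intro exI[of _ "Cd n"]) simp
  next
    fix n :: nat assume "even n \<and> n \<ge> 2" then show "\<exists>C. linear_code (2*n) n (min 4 n) C \<and> euclid_self_dual (2*n) C"
      using B by blast
  next
    fix n :: nat assume h: "even n \<and> n \<ge> 4"
    then have "min 4 n = 4" by simp
    moreover have "linear_code (2*n) n (min 4 n) (Cd n) \<and> euclid_self_dual (2*n) (Cd n)"
      using B[of n] h by simp
    ultimately show "\<exists>C. linear_code (2*n) n 4 C \<and> euclid_self_dual (2*n) C"
      by (intro exI[of _ "Cd n"]) simp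
  qed
qed

end
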